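(* Let $0\le\alpha\le\alpha_{space}:=\min(v_0/4,\gamma/(2V^0))$, let $u_0\in C_\alpha$ and let $(s,u)$ be the solution of the free-interface problem with initial data $u_0$. Then for all $t>0$ $$|u(\cdot,t)|_\alpha\le \frac{V^0}{\sqrt\gamma}+2\exp[(-\gamma+\alpha^2+\alpha V^0)t]\,|u_0|_\alpha .$$ If in addition $\alpha<\alpha_{time}:=\frac{V^0}{2}\big(\sqrt{1+4\gamma/(V^0)^2}-1\big)$ (the positive root of $\alpha^2+\alpha V^0-\gamma=0$), then the contribution from the initial data decays exponentially: $|T_2(t)u_0|_\alpha\le 2e^{-\kappa t}|u_0|_\alpha$ with $\kappa=\gamma-\alpha^2-\alpha V^0>0$.
   Context: Fix $\gamma>0$, $0<v_0\le V^0$. The kinetics $g:[0,\infty)\to\mathbb{R}$ is monotonically decreasing, differentiable, $|g'|\le C$, $-V^0\le g\le -v_0$. Free-interface problem: find $s(t)$, $s(0)=0$, and $u(x,t)$ with $u_t=u_{xx}-\gamma u$ for $x\ne s(t)$, $t>0$; $u(x,0)=u_0(x)$; $g(u(s(t),t))=v(t)$; $u_x^+(s(t),t)-u_x^-(s(t),t)=v(t)$, with $v=s'$, $u_x^\pm$ one-sided derivatives, $u\to0$ at $\pm\infty$; the classical solution exists, is unique, and $-V^0\le v\le-v_0$. With $G(x,t,\xi,\tau)=[4\pi(t-\tau)]^{-1/2}\exp\{-(x-\xi)^2/(4(t-\tau))\}$, $u(\cdot,t)=T_1(t)u_0+T_2(t)u_0$ where $(T_2(t)u_0)(x)=e^{-\gamma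 t}\int G(x,t,\xi,0)u_0(\xi)d\xi$ (initial-data contribution) and $(T_1(t)u_0)(x)=-\int_0^t e^{-\gamma(t-\tau)}G(x,t,s(\tau),\tau)v(\tau)d\tau$. Weighted norms: $|f|_\alpha=\sup_x e^{\alpha|x|}|f(x)|$, $C_\alpha=\{f\in C(\mathbb{R}):|f|_\alpha<\infty\}$; for functions associated with the solution at time $t$, $|f(\cdot,t)|_\alpha:=\sup_x e^{\alpha|x-s(t)|}|f(x,t)|$. *)

theory Defs
  imports "HOL-Analysis.Analysis"
begin

definition heatG :: "real \<Rightarrow> real \<Rightarrow> real \<Rightarrow> real \<Rightarrow> real" where
  "heatG x t \<xi> \<tau> = exp (- ((x - \<xi>)\<^sup>2) / (4 * (t - \<tau>))) / sqrt (4 * pi * (t - \<tau>))"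

definition T2 :: "real \<Rightarrow> real \<Rightarrow> (real \<Rightarrow> real) \<Rightarrow> real \<Rightarrow> real" where
  "T2 \<gamma> t u0 x = exp (- \<gamma> * t) * integral UNIV (\<lambda>\<xi>. heatG x t \<xi> 0 * u0 \<xi>)"

text \<open>Interface contribution (T_1(t) u_0)(x); it depends on u_0 through s and v = s'.\<close>
definition T1 :: "real \<Rightarrow> (real \<Rightarrow> real) \<Rightarrow> (real \<Rightarrow> real) \<Rightarrow> real \<Rightarrow> real \<Rightarrow> real" where
  "T1 \<gamma> s v t x = - integral {0..t} (\<lambda>\<tau>. exp (- \<gamma> * (t - \<tau>)) * heatG x t (s \<tau>) \<tau> * v \<tau>)"

text \<open>Weighted sup norm |f|_alpha (extended-real valued, so that it is always defined).\<close>
definition wnorm :: "real \<Rightarrow> (real \<Rightarrow> real) \<Rightarrow> ereal" where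
  "wnorm \<alpha> f = (SUP x. ereal (exp (\<alpha> * \<bar>x\<bar>) * \<bar>f x\<bar>))"

text \<open>Weighted norm centred at the interface position c = s(t).\<close>
definition wnorm_at :: "real \<Rightarrow> real \<Rightarrow> (real \<Rightarrow> real) \<Rightarrow> ereal" where
  "wnorm_at \<alpha> c f = (SUP x. ereal (exp (\<alpha> * \<bar>x - c\<bar>) * \<bar>f x\<bar>))"

definition C_alpha :: "real \<Rightarrow> (real \<Rightarrow> real) set" where
  "C_alpha \<alpha> = {f. continuous_on UNIV f \<and> wnorm \<alpha> f < \<infinity>}"

definition fip_solution ::
  "real \<Rightarrow> (real \<Rightarrow> real) \<Rightarrow> (real \<Rightarrow> real) \<Rightarrow> (real \<Rightarrow> real) \<Rightarrow> (real \<Rightarrow> real)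
     \<Rightarrow> (real \<Rightarrow> real \<Rightarrow> real) \<Rightarrow> bool" where
  "fip_solution \<gamma> g u0 s v u \<longleftrightarrow>
     s 0 = 0 \<and>
     (\<forall>t\<ge>0. (s has_real_derivative v t) (at t within {0..})) \<and>
     continuous_on {0..} v \<and>
     continuous_on {p. snd p \<ge> 0} (\<lambda>p. u (fst p) (snd p)) \<and>
     (\<forall>x. u x 0 = u0 x) \<and>
     (\<forall>t>0. \<forall>x. x \<noteq> s t \<longrightarrow>
        (\<lambda>y. u y t) field_differentiable (at x) \<and>
        (\<exists>uxx. (deriv (\<lambda>y. u y t) has_real_derivative uxx) (at x) \<and>
               ((\<lambda>\<tau>. u x \<tau>) has_real_derivative (uxx - \<gamma> * u x t)) (at t))) \<and>
     (\<forall>t>0. u (s t) t \<ge> 0 \<and> g (u (s t) t) = v t) \<and>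
     (\<forall>t>0. \<exists>dp dm. ((\<lambda>y. u y t) has_real_derivative dp) (at_right (s t)) \<and>
                   ((\<lambda>y. u y t) has_real_derivative dm) (at_left (s t)) \<and>
                   dp - dm = v t) \<and>
     (\<forall>t\<ge>0. ((\<lambda>x. u x t) \<longlongrightarrow> 0) at_top \<and> ((\<lambda>x. u x t) \<longlongrightarrow> 0) at_bot)"

end

theory Submission
  imports Defs "HOL-Probability.Distributions"
begin

lemma heat_int:
  assumes "t > 0"
  shows "((\<lambda>\<xi>. heatG m t \<xi> 0) has_integral 1) UNIV"
proof -
  have eq: "(\<lambda>\<xi>. heatG m t \<xi> 0) = normal_density m (sqrt (2*t))"
    using assms by (auto simp: fun_eq_iff heatG_def normal_density_def power2_commute)
  show ?thesis unfolding eq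
    using has_integral_integral_lborel[OF integrable_normal_density[of "sqrt (2*t)" m]] assms by simp
qed

lemma gauss_shift_ineq:
  fixes t \<alpha> y :: real
  assumes "t > 0" "\<alpha> \<ge> 0"
  shows "exp (- (y\<^sup>2) / (4*t)) * exp (\<alpha> * \<bar>y\<bar>)
     \<le> exp (\<alpha>\<^sup>2 * t) * (exp (- ((y - 2*\<alpha>*t)\<^sup>2) / (4*t)) + exp (- ((y + 2*\<alpha>*t)\<^sup>2) / (4*t)))"
proof (cases "y \<ge> 0")
  case True
  have "exp (- (y\<^sup>2) / (4*t)) * exp (\<alpha> * \<bar>y\<bar>) = exp (\<alpha>\<^sup>2 * t) * exp (- ((y - 2*\<alpha>*t)\<^sup>2) / (4*t))"
  proof -
    have e: "- (y\<^sup>2) / (4*t) + \<alpha> * \<bar>y\<bar> = \<alpha>\<^sup>2 * t + - ((y - 2*\<alpha>*t)\<^sup>2) / (4*t)"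
      using True assms by (simp add: field_simps power2_eq_square)
    show ?thesis by (metis exp_add e)
  qed
  then show ?thesis by (simp add: distrib_left add_increasing2)
next
  case False
  have "exp (- (y\<^sup>2) / (4*t)) * exp (\<alpha> * \<bar>y\<bar>) = exp (\<alpha>\<^sup>2 * t) * exp (- ((y + 2*\<alpha>*t)\<^sup>2) / (4*t))"
  proof -
    have e: "- (y\<^sup>2) / (4*t) + \<alpha> * \<bar>y\<bar> = \<alpha>\<^sup>2 * t + - ((y + 2*\<alpha>*t)\<^sup>2) / (4*t)"
      using False assms by (simp add: field_simps power2_eq_square)
    show ?thesis by (metis exp_add e)
  qed
  then show ?thesis by (simp add: distrib_left add_increasing)
qed

lemma T2_bound:
  fixes t \<alpha> M x :: real and u0 :: "real \<Rightarrow> real"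
  assumes t: "t > 0" and a: "\<alpha> \<ge> 0" and M: "M \<ge> 0"
    and u0: "\<And>\<xi>. \<bar>u0 \<xi>\<bar> \<le> M * exp (- \<alpha> * \<bar>\<xi>\<bar>)"
  shows "exp (\<alpha> * \<bar>x\<bar>) * \<bar>integral UNIV (\<lambda>\<xi>. heatG x t \<xi> 0 * u0 \<xi>)\<bar> \<le> 2 * M * exp (\<alpha>\<^sup>2 * t)"
proof (cases "(\<lambda>\<xi>. heatG x t \<xi> 0 * u0 \<xi>) integrable_on UNIV")
  case False
  then show ?thesis using M by (simp add: not_integrable_integral)
next
  case True
  define K where "K = M * exp (- \<alpha> * \<bar>x\<bar>) * exp (\<alpha>\<^sup>2 * t)"
  define g where "g = (\<lambda>\<xi>. K * (heatG (x + 2*\<alpha>*t) t \<xi> 0 + heatG (x - 2*\<alpha>*t) t \<xi> 0))"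
  have gi: "(g has_integral (K * 2)) UNIV"
    unfolding g_def
    using has_integral_mult_right[OF has_integral_add[OF heat_int[OF t] heat_int[OF t]], of K]
    by simp
  have S: "sqrt (4 * pi * t) > 0" using t by simp
  have le: "\<bar>heatG x t \<xi> 0 * u0 \<xi>\<bar> \<le> g \<xi>" for \<xi>
  proof -
    have h0: "heatG x t \<xi> 0 \<ge> 0" unfolding heatG_def using t by simp
    have "\<bar>heatG x t \<xi> 0 * u0 \<xi>\<bar> = heatG x t \<xi> 0 * \<bar>u0 \<xi>\<bar>" using h0 by (simp add: abs_mult)
    also have "\<dots> \<le> heatG x t \<xi> 0 * (M * exp (- \<alpha> * \<bar>\<xi>\<bar>))" using h0 u0 by (simp add: mult_left_mono)
    also have "\<dots> \<le> heatG x t \<xi> 0 * (M * (exp (- \<alpha> * \<bar>x\<bar>) * exp (\<alpha> * \<bar>\<xi> - x\<bar>)))"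
    proof -
      have "- \<alpha> * \<bar>\<xi>\<bar> \<le> - \<alpha> * \<bar>x\<bar> + \<alpha> * \<bar>\<xi> - x\<bar>"
      proof -
        have "\<bar>x\<bar> \<le> \<bar>\<xi>\<bar> + \<bar>\<xi> - x\<bar>" by linarith
        then have "\<alpha> * \<bar>x\<bar> \<le> \<alpha> * \<bar>\<xi>\<bar> + \<alpha> * \<bar>\<xi> - x\<bar>" using a
          by (metis distrib_left mult_left_mono)
        then show ?thesis by linarith
      qed
      then have "exp (- \<alpha> * \<bar>\<xi>\<bar>) \<le> exp (- \<alpha> * \<bar>x\<bar>) * exp (\<alpha> * \<bar>\<xi> - x\<bar>)"
        by (simp add: mult_exp_exp)
      then show ?thesis using h0 M by (simp add: mult_left_mono)
    qed
    also have "\<dots> = M * exp (- \<alpha> * \<bar>x\<bar>) * ((exp (- ((\<xi> - x)\<^sup>2) / (4*t)) * exp (\<alpha> * \<bar>\<xi> - x\<bar>)) / sqrt (4 * pi * t))"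
      unfolding heatG_def by (simp add: power2_commute)
    also have "\<dots> \<le> M * exp (- \<alpha> * \<bar>x\<bar>) * ((exp (\<alpha>\<^sup>2 * t) * (exp (- (((\<xi> - x) - 2*\<alpha>*t)\<^sup>2) / (4*t)) + exp (- (((\<xi> - x) + 2*\<alpha>*t)\<^sup>2) / (4*t)))) / sqrt (4 * pi * t))"
      using gauss_shift_ineq[OF t a, of "\<xi> - x"] S M
      by (intro mult_left_mono divide_right_mono) auto
    also have "\<dots> = g \<xi>"
      unfolding g_def K_def heatG_def
      by (simp add: add_divide_distrib power2_commute algebra_simps)
    finally show ?thesis .
  qed
  have "\<bar>integral UNIV (\<lambda>\<xi>. heatG x t \<xi> 0 * u0 \<xi>)\<bar> \<le> integral UNIV g"
    using integral_norm_bound_integral[OF True has_integral_integrable[OF gi]] le by simp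
  also have "\<dots> = K * 2" using gi by (simp add: integral_unique)
  finally have "\<bar>integral UNIV (\<lambda>\<xi>. heatG x t \<xi> 0 * u0 \<xi>)\<bar> \<le> K * 2" .
  then have "exp (\<alpha> * \<bar>x\<bar>) * \<bar>integral UNIV (\<lambda>\<xi>. heatG x t \<xi> 0 * u0 \<xi>)\<bar> \<le> exp (\<alpha> * \<bar>x\<bar>) * (K * 2)"
    by (simp add: mult_left_mono)
  also have "\<dots> = 2 * M * exp (\<alpha>\<^sup>2 * t)"
    unfolding K_def by (simp add: exp_minus field_simps)
  finally show ?thesis .
qed

lemma T1_ptw:
  fixes \<gamma> \<alpha> V0 r a b w x :: real
  assumes r: "r > 0" and a: "\<alpha> \<ge> 0" and w: "\<bar>w\<bar> \<le> V0" and ab: "\<bar>b - a\<bar> \<le> V0 * r"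
  shows "\<bar>exp (- \<gamma> * r) * (exp (- ((x - a)\<^sup>2) / (4 * r)) / sqrt (4 * pi * r)) * w\<bar>
     \<le> V0 / sqrt (4 * pi) * exp (- \<alpha> * \<bar>x - b\<bar>) * (exp (- (\<gamma> - \<alpha> * V0 - \<alpha>\<^sup>2) * r) / sqrt r)"
proof -
  have 1: "- ((x - a)\<^sup>2) / (4 * r) \<le> \<alpha>\<^sup>2 * r - \<alpha> * \<bar>x - a\<bar>"
  proof -
    have "0 \<le> (\<bar>x - a\<bar> - 2 * \<alpha> * r)\<^sup>2" by simp
    then have "4 * r * (\<alpha> * \<bar>x - a\<bar>) - 4 * r * (\<alpha>\<^sup>2 * r) \<le> (x - a)\<^sup>2"
      by (simp add: power2_eq_square algebra_simps)
    then show ?thesis using r by (simp add: field_simps)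
  qed
  have 2: "- \<alpha> * \<bar>x - a\<bar> \<le> - \<alpha> * \<bar>x - b\<bar> + \<alpha> * V0 * r"
  proof -
    have "\<bar>x - b\<bar> \<le> \<bar>x - a\<bar> + V0 * r" using ab by linarith
    then have "\<alpha> * \<bar>x - b\<bar> \<le> \<alpha> * (\<bar>x - a\<bar> + V0 * r)" using a by (simp add: mult_left_mono)
    then show ?thesis by (simp add: algebra_simps)
  qed
  have 3: "exp (- \<gamma> * r) * exp (- ((x - a)\<^sup>2) / (4 * r)) \<le> exp (- \<alpha> * \<bar>x - b\<bar>) * exp (- (\<gamma> - \<alpha> * V0 - \<alpha>\<^sup>2) * r)"
  proof -
    have "- \<gamma> * r + - ((x - a)\<^sup>2) / (4 * r) \<le> - \<alpha> * \<bar>x - b\<bar> + - (\<gamma> - \<alpha> * V0 - \<alpha>\<^sup>2) * r"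
      using 1 2 by (simp add: algebra_simps)
    then show ?thesis by (simp add: exp_add[symmetric])
  qed
  have sq: "sqrt (4 * pi * r) = sqrt (4 * pi) * sqrt r" by (simp add: real_sqrt_mult)
  have pos: "sqrt (4 * pi) * sqrt r > 0" using r by simp
  have "\<bar>exp (- \<gamma> * r) * (exp (- ((x - a)\<^sup>2) / (4 * r)) / sqrt (4 * pi * r)) * w\<bar>
      = (exp (- \<gamma> * r) * exp (- ((x - a)\<^sup>2) / (4 * r))) * \<bar>w\<bar> / (sqrt (4 * pi) * sqrt r)"
    unfolding sq using pos r by (simp add: abs_mult)
  also have "\<dots> \<le> (exp (- \<alpha> * \<bar>x - b\<bar>) * exp (- (\<gamma> - \<alpha> * V0 - \<alpha>\<^sup>2) * r)) * V0 / (sqrt (4 * pi) * sqrt r)"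
  proof -
    have m: "(exp (- \<gamma> * r) * exp (- ((x - a)\<^sup>2) / (4 * r))) * \<bar>w\<bar> \<le> (exp (- \<alpha> * \<bar>x - b\<bar>) * exp (- (\<gamma> - \<alpha> * V0 - \<alpha>\<^sup>2) * r)) * V0"
      by (rule mult_mono[OF 3 w]) auto
    show ?thesis using divide_right_mono[OF m, of "sqrt (4 * pi) * sqrt r"] pos by simp
  qed
  also have "\<dots> = V0 / sqrt (4 * pi) * exp (- \<alpha> * \<bar>x - b\<bar>) * (exp (- (\<gamma> - \<alpha> * V0 - \<alpha>\<^sup>2) * r) / sqrt r)"
    by simp
  finally show ?thesis .
qed

lemma piece2:
  fixes f :: "real \<Rightarrow> real"
  assumes a: "0 \<le> a" "a \<le> t" and c: "c > 0" "c * (t - a) \<le> 1" and K: "K \<ge> 0"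
    and fi: "f integrable_on {a..t}" and ft: "f t = 0"
    and fb: "\<And>\<tau>. 0 \<le> \<tau> \<Longrightarrow> \<tau> < t \<Longrightarrow> \<bar>f \<tau>\<bar> \<le> K * (exp (- c * (t - \<tau>)) / sqrt (t - \<tau>))"
  shows "\<bar>integral {a..t} f\<bar> \<le> K * (pi / 2) / sqrt c"
proof -
  define D where "D = (\<lambda>\<tau>. K / (sqrt (t - \<tau>) * (1 + c * (t - \<tau>))))"
  define F where "F = (\<lambda>\<tau>. - K * 2 * arctan (sqrt c * sqrt (t - \<tau>)) / sqrt c)"
  have cont: "continuous_on {a..t} F" unfolding F_def using c by (intro continuous_intros) auto
  have der: "(F has_vector_derivative D \<tau>) (at \<tau>)" if "\<tau> \<in> {a<..<t}" for \<tau>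
  proof -
    have r: "t - \<tau> > 0" using that by auto
    have "(F has_real_derivative D \<tau>) (at \<tau>)"
    proof -
      have cc: "sqrt c * (sqrt c * z) = c * z" for z using c by (simp add: mult.assoc[symmetric])
      have p1: "1 + c * (t - \<tau>) > 0" using r c by (simp add: add_pos_pos)
      then have nz0: "sqrt (t - \<tau>) * (1 + c * (t - \<tau>)) \<noteq> 0" using r by simp
      have nz: "c * (2 * sqrt (t - \<tau>)) + c * (c * (t * (2 * sqrt (t - \<tau>)))) - \<tau> * (c * (c * (2 * sqrt (t - \<tau>)))) \<noteq> 0"
      proof -
        have "c * (2 * sqrt (t - \<tau>)) + c * (c * (t * (2 * sqrt (t - \<tau>)))) - \<tau> * (c * (c * (2 * sqrt (t - \<tau>))))
            = (2 * c) * (sqrt (t - \<tau>) * (1 + c * (t - \<tau>)))" by (simp add: algebra_simps)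
        then show ?thesis using nz0 c by simp
      qed
      show ?thesis unfolding F_def D_def using r c nz0 nz by (auto intro!: derivative_eq_intros simp: field_simps cc)
    qed
    then show ?thesis by (simp add: has_real_derivative_iff_has_vector_derivative)
  qed
  have Di: "(D has_integral (F t - F a)) {a..t}"
    using fundamental_theorem_of_calculus_interior[OF a(2) cont der] by blast
  have le: "norm (f \<tau>) \<le> D \<tau>" if "\<tau> \<in> {a..t}" for \<tau>
  proof (cases "\<tau> = t")
    case True then show ?thesis using ft by (simp add: D_def)
  next
    case False
    then have r: "t - \<tau> > 0" using that by auto
    have "exp (- c * (t - \<tau>)) * (1 + c * (t - \<tau>)) \<le> 1"
    proof -
      have gen: "exp (- z) * (1 + z) \<le> 1" for z :: real
      proof -
        have "exp (- z) * (1 + z) \<le> exp (- z) * exp z" by (intro mult_left_mono exp_ge_add_one_self) simp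
        also have "\<dots> = 1" by (simp add: exp_minus_inverse mult.commute)
        finally show ?thesis .
      qed
      show ?thesis using gen[of "c * (t - \<tau>)"] by simp
    qed
    moreover have gen2: "E / q \<le> 1 / (q * p)" if "q > 0" "p > 0" "E * p \<le> 1" for E q p :: real
    proof -
      have "E / q = (E * p) * (1 / (q * p))" using that by simp
      also have "\<dots> \<le> 1 * (1 / (q * p))" using that by (intro mult_right_mono) auto
      finally show ?thesis by simp
    qed
    ultimately have "exp (- c * (t - \<tau>)) / sqrt (t - \<tau>) \<le> 1 / (sqrt (t - \<tau>) * (1 + c * (t - \<tau>)))"
      using r c by (intro gen2) (auto simp: add_pos_pos)
    then have "K * (exp (- c * (t - \<tau>)) / sqrt (t - \<tau>)) \<le> D \<tau>"
      unfolding D_def using K by (simp add: mult_left_mono divide_inverse)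
    then show ?thesis using fb[of \<tau>] that r a by auto
  qed
  have "\<bar>integral {a..t} f\<bar> \<le> integral {a..t} D"
    using integral_norm_bound_integral[OF fi has_integral_integrable[OF Di] le] by simp
  also have "\<dots> = F t - F a" using Di by (simp add: integral_unique)
  also have "\<dots> = K * 2 * arctan (sqrt (c * (t - a))) / sqrt c" by (simp add: F_def real_sqrt_mult)
  also have "\<dots> \<le> K * 2 * arctan 1 / sqrt c"
  proof -
    have "sqrt (c * (t - a)) \<le> 1" using c by simp
    then have A: "arctan (sqrt (c * (t - a))) \<le> arctan 1" by (rule arctan_monotone')
    have K2: "0 \<le> K * 2" using K by simp
    from mult_left_mono[OF A K2] have "K * 2 * arctan (sqrt (c * (t - a))) \<le> K * 2 * arctan 1" .
    then show ?thesis by (rule divide_right_mono) (use c in simp)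
  qed
  also have "\<dots> = K * (pi / 2) / sqrt c" by (simp add: arctan_one)
  finally show ?thesis .
qed

lemma piece1:
  fixes f :: "real \<Rightarrow> real"
  assumes m: "0 \<le> m" "m \<le> t" and c: "c > 0" "c * (t - m) = 1" and K: "K \<ge> 0"
    and fi: "f integrable_on {0..m}"
    and fb: "\<And>\<tau>. 0 \<le> \<tau> \<Longrightarrow> \<tau> < t \<Longrightarrow> \<bar>f \<tau>\<bar> \<le> K * (exp (- c * (t - \<tau>)) / sqrt (t - \<tau>))"
  shows "\<bar>integral {0..m} f\<bar> \<le> K * exp (- 1) / sqrt c"
proof -
  define D where "D = (\<lambda>\<tau>. K * sqrt c * exp (- c * (t - \<tau>)))"
  define F where "F = (\<lambda>\<tau>. K * sqrt c * exp (- c * (t - \<tau>)) / c)"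
  have cont: "continuous_on {0..m} F" unfolding F_def using c by (intro continuous_intros) auto
  have der: "(F has_vector_derivative D \<tau>) (at \<tau>)" for \<tau>
  proof -
    have "(F has_real_derivative D \<tau>) (at \<tau>)"
      unfolding F_def D_def using c by (auto intro!: derivative_eq_intros simp: field_simps)
    then show ?thesis by (simp add: has_real_derivative_iff_has_vector_derivative)
  qed
  have Di: "(D has_integral (F m - F 0)) {0..m}"
    using fundamental_theorem_of_calculus_interior[OF m(1) cont der] by blast
  have le: "norm (f \<tau>) \<le> D \<tau>" if "\<tau> \<in> {0..m}" for \<tau>
  proof -
    have mt: "m < t" using c m(2) by (cases "m = t") auto
    have r: "t - \<tau> > 0" using that mt by auto
    have "c * (t - \<tau>) \<ge> 1" using that c by (simp add: algebra_simps)
    then have "1 \<le> sqrt (c * (t - \<tau>))" by simp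
    then have "1 \<le> sqrt c * sqrt (t - \<tau>)" by (simp add: real_sqrt_mult)
    then have "1 / sqrt (t - \<tau>) \<le> sqrt c" using r by (simp add: field_simps)
    then have "exp (- c * (t - \<tau>)) * (1 / sqrt (t - \<tau>)) \<le> exp (- c * (t - \<tau>)) * sqrt c"
      by (intro mult_left_mono) auto
    from mult_left_mono[OF this K] have "K * (exp (- c * (t - \<tau>)) / sqrt (t - \<tau>)) \<le> D \<tau>"
      unfolding D_def by (simp add: algebra_simps)
    then show ?thesis using fb[of \<tau>] that mt by auto
  qed
  have "\<bar>integral {0..m} f\<bar> \<le> integral {0..m} D"
    using integral_norm_bound_integral[OF fi has_integral_integrable[OF Di] le] by simp
  also have "\<dots> = F m - F 0" using Di by (simp add: integral_unique)
  also have "\<dots> \<le> F m" unfolding F_def using K c by simp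
  also have "\<dots> = K * exp (- 1) / sqrt c"
  proof -
    have "- c * (t - m) = - 1" using c by simp
    then have "F m = K * sqrt c * exp (- 1) / c" unfolding F_def by simp
    also have "\<dots> = K * exp (- 1) / sqrt c"
      using c by (simp add: field_simps real_sqrt_mult[symmetric] flip: real_sqrt_mult)
    finally show ?thesis .
  qed
  finally show ?thesis .
qed

lemma T1_total:
  fixes f :: "real \<Rightarrow> real"
  assumes t: "t > 0" and c: "c > 0" and K: "K \<ge> 0" and ft: "f t = 0"
    and fb: "\<And>\<tau>. 0 \<le> \<tau> \<Longrightarrow> \<tau> < t \<Longrightarrow> \<bar>f \<tau>\<bar> \<le> K * (exp (- c * (t - \<tau>)) / sqrt (t - \<tau>))"
  shows "\<bar>integral {0..t} f\<bar> \<le> K * (pi / 2 + exp (- 1)) / sqrt c"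
proof (cases "f integrable_on {0..t}")
  case False
  then show ?thesis using K c by (simp add: not_integrable_integral add_nonneg_nonneg)
next
  case fi: True
  have tot: "K * (pi / 2) / sqrt c + K * exp (- 1) / sqrt c = K * (pi / 2 + exp (- 1)) / sqrt c"
    using c by (simp add: field_simps)
  show ?thesis
  proof (cases "c * t \<le> 1")
    case True
    have "\<bar>integral {0..t} f\<bar> \<le> K * (pi / 2) / sqrt c"
      using piece2[of 0 t c K f] True c K fi ft fb t by simp
    also have "\<dots> \<le> K * (pi / 2) / sqrt c + K * exp (- 1) / sqrt c" using K c by simp
    finally show ?thesis using tot by simp
  next
    case False
    define m where "m = t - 1 / c"
    have m0: "0 \<le> m" using False c by (simp add: m_def field_simps)
    have mt: "m \<le> t" using c by (simp add: m_def)
    have cm: "c * (t - m) = 1" using c by (simp add: m_def)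
    have f1: "f integrable_on {0..m}" using integrable_subinterval_real[OF fi] m0 mt by auto
    have f2: "f integrable_on {m..t}" using integrable_subinterval_real[OF fi] m0 mt by auto
    have "integral {0..t} f = integral {0..m} f + integral {m..t} f"
      using Henstock_Kurzweil_Integration.integral_combine[OF m0 mt fi] by simp
    then have "\<bar>integral {0..t} f\<bar> \<le> \<bar>integral {0..m} f\<bar> + \<bar>integral {m..t} f\<bar>" by simp
    also have "\<dots> \<le> K * exp (- 1) / sqrt c + K * (pi / 2) / sqrt c"
      using piece1[OF m0 mt c cm K f1 fb] piece2[OF m0 mt c _ K f2 ft fb] cm by simp
    finally show ?thesis using tot by simp
  qed
qed

lemma numeric_bound:
  fixes \<gamma> c V0 :: real
  assumes g: "\<gamma> > 0" and c: "c \<ge> 3 * \<gamma> / 8" and V: "V0 \<ge> 0"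
  shows "V0 / sqrt (4 * pi) * (pi / 2 + exp (- 1)) / sqrt c \<le> V0 / sqrt \<gamma>"
proof -
  define A where "A = pi / 2 + exp (- 1)"
  have e1: "exp (1::real) \<ge> 5 / 2" using exp_lower_Taylor_quadratic[of 1] by simp
  have e2: "exp (- 1::real) \<le> 2 / 5"
  proof -
    have "exp (- 1::real) = 1 / exp 1" by (simp add: exp_minus field_simps)
    also have "\<dots> \<le> 1 / (5 / 2)" using e1 by (intro divide_left_mono) auto
    finally show ?thesis by simp
  qed
  have A0: "A > 0" unfolding A_def using pi_gt_zero by (simp add: add_pos_pos)
  have Ale: "A \<le> pi / 2 + 2 / 5" unfolding A_def using e2 by simp
  have "A\<^sup>2 \<le> (pi / 2 + 2 / 5)\<^sup>2" using Ale A0 by (intro power_mono) auto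
  also have "\<dots> \<le> 3 / 2 * pi"
  proof -
    have p1: "pi \<le> 63 / 20" using pi_approx(2) by simp
    have p2: "pi \<ge> 3" using pi_gt3 by simp
    have "pi * pi \<le> 63 / 20 * pi" using p1 by (intro mult_right_mono) auto
    moreover have "(pi / 2 + 2 / 5)\<^sup>2 = pi * pi / 4 + 2 / 5 * pi + 4 / 25" by (simp add: power2_eq_square algebra_simps)
    ultimately show ?thesis using p1 p2 by linarith
  qed
  finally have A2: "A\<^sup>2 \<le> 3 / 2 * pi" .
  have cpos: "c > 0" using c g by linarith
  have "A\<^sup>2 * \<gamma> \<le> 3 / 2 * pi * \<gamma>" using A2 g by (simp add: mult_right_mono)
  also have "\<dots> \<le> 4 * pi * c" using c pi_gt_zero by (simp add: field_simps)
  finally have "A\<^sup>2 * \<gamma> \<le> 4 * pi * c" .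
  then have "sqrt (A\<^sup>2 * \<gamma>) \<le> sqrt (4 * pi * c)" by simp
  then have "A * sqrt \<gamma> \<le> sqrt (4 * pi) * sqrt c" using A0 by (simp add: real_sqrt_mult)
  then have q: "A / (sqrt (4 * pi) * sqrt c) \<le> 1 / sqrt \<gamma>"
    using g cpos by (simp add: field_simps)
  have "V0 / sqrt (4 * pi) * A / sqrt c = V0 * (A / (sqrt (4 * pi) * sqrt c))" by simp
  also have "\<dots> \<le> V0 * (1 / sqrt \<gamma>)" using q V by (rule mult_left_mono)
  finally show ?thesis unfolding A_def by simp
qed

theorem mainTheorem5:
  fixes \<gamma> v0 V0 C \<alpha> :: real
    and g g' u0 s v :: "real \<Rightarrow> real"
    and u :: "real \<Rightarrow> real \<Rightarrow> real"
  assumes gamma_pos: "\<gamma> > 0"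
    and v0_pos: "0 < v0" and v0_le: "v0 \<le> V0"
    and g_mono: "\<forall>a b. 0 \<le> a \<and> a \<le> b \<longrightarrow> g b \<le> g a"
    and g_deriv: "\<forall>y\<ge>0. (g has_real_derivative g' y) (at y within {0..})"
    and g'_bound: "\<forall>y\<ge>0. \<bar>g' y\<bar> \<le> C"
    and g_bounds: "\<forall>y\<ge>0. - V0 \<le> g y \<and> g y \<le> - v0"
    and alpha_nonneg: "0 \<le> \<alpha>"
    and alpha_space: "\<alpha> \<le> min (v0 / 4) (\<gamma> / (2 * V0))"
    and u0_in: "u0 \<in> C_alpha \<alpha>"
    and sol: "fip_solution \<gamma> g u0 s v u"
    and vel: "\<forall>t\<ge>0. - V0 \<le> v t \<and> v t \<le> - v0"
    and repr: "\<forall>t>0. \<forall>x. u x t = T1 \<gamma> s v t x + T2 \<gamma> t u0 x"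
  shows "(\<forall>t>0. wnorm_at \<alpha> (s t) (\<lambda>x. u x t)
            \<le> ereal (V0 / sqrt \<gamma>)
              + ereal (2 * exp ((- \<gamma> + \<alpha>\<^sup>2 + \<alpha> * V0) * t)) * wnorm \<alpha> u0)
       \<and> (\<alpha> < V0 / 2 * (sqrt (1 + 4 * \<gamma> / V0\<^sup>2) - 1) \<longrightarrow>
            (let \<kappa> = \<gamma> - \<alpha>\<^sup>2 - \<alpha> * V0 in
              \<kappa> > 0 \<and>
              (\<forall>t>0. wnorm_at \<alpha> (s t) (T2 \<gamma> t u0)
                       \<le> ereal (2 * exp (- \<kappa> * t)) * wnorm \<alpha> u0)))"
proof -
  have V0pos: "V0 > 0" using v0_pos v0_le by linarith
  have s0: "s 0 = 0" using sol unfolding fip_solution_def by blast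
  have sder: "\<And>z. z \<in> {0..} \<Longrightarrow> (s has_field_derivative v z) (at z within {0..})"
    using sol unfolding fip_solution_def by auto
  have vb: "norm (v z) \<le> V0" if "z \<in> {0..}" for z
  proof -
    have "- V0 \<le> v z \<and> v z \<le> - v0" using vel that by simp
    then show ?thesis using v0_pos by (simp add: abs_le_iff)
  qed
  have slip: "\<bar>s a - s b\<bar> \<le> V0 * \<bar>a - b\<bar>" if "a \<ge> 0" "b \<ge> 0" for a b
    using field_differentiable_bound[OF convex_real_interval(1) sder vb, of a b] that by auto
  have wn0: "wnorm \<alpha> u0 \<ge> 0"
  proof -
    have a: "ereal (exp (\<alpha> * \<bar>0\<bar>) * \<bar>u0 0\<bar>) \<le> wnorm \<alpha> u0" unfolding wnorm_def by (rule SUP_upper) simp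
    have b: "0 \<le> ereal (exp (\<alpha> * \<bar>0\<bar>) * \<bar>u0 0\<bar>)" by simp
    show ?thesis using order_trans[OF b a] .
  qed
  have wnf: "wnorm \<alpha> u0 < \<infinity>" using u0_in unfolding C_alpha_def by simp
  define M where "M = real_of_ereal (wnorm \<alpha> u0)"
  have wM: "wnorm \<alpha> u0 = ereal M" unfolding M_def using wn0 wnf
    by (cases "wnorm \<alpha> u0") auto
  have M0: "M \<ge> 0" using wn0 wM by simp
  have u0b: "\<bar>u0 \<xi>\<bar> \<le> M * exp (- \<alpha> * \<bar>\<xi>\<bar>)" for \<xi>
  proof -
    have "ereal (exp (\<alpha> * \<bar>\<xi>\<bar>) * \<bar>u0 \<xi>\<bar>) \<le> wnorm \<alpha> u0" unfolding wnorm_def by (rule SUP_upper) simp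
    then have "exp (\<alpha> * \<bar>\<xi>\<bar>) * \<bar>u0 \<xi>\<bar> \<le> M" using wM by simp
    then show ?thesis by (simp add: exp_minus field_simps)
  qed
  have T2b: "exp (\<alpha> * \<bar>x - s t\<bar>) * \<bar>T2 \<gamma> t u0 x\<bar> \<le> 2 * M * exp ((- \<gamma> + \<alpha>\<^sup>2 + \<alpha> * V0) * t)"
    if t: "t > 0" for t x
  proof -
    define I where "I = integral UNIV (\<lambda>\<xi>. heatG x t \<xi> 0 * u0 \<xi>)"
    have IB: "exp (\<alpha> * \<bar>x\<bar>) * \<bar>I\<bar> \<le> 2 * M * exp (\<alpha>\<^sup>2 * t)"
      unfolding I_def by (rule T2_bound[OF t alpha_nonneg M0 u0b])
    have st: "\<bar>s t\<bar> \<le> V0 * t" using slip[of t 0] t s0 by simp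
    have "\<alpha> * \<bar>x - s t\<bar> \<le> \<alpha> * \<bar>x\<bar> + \<alpha> * V0 * t"
    proof -
      have "\<bar>x - s t\<bar> \<le> \<bar>x\<bar> + V0 * t" using st by linarith
      then have "\<alpha> * \<bar>x - s t\<bar> \<le> \<alpha> * (\<bar>x\<bar> + V0 * t)" using alpha_nonneg by (rule mult_left_mono)
      then show ?thesis by (simp add: algebra_simps)
    qed
    then have ex: "exp (\<alpha> * \<bar>x - s t\<bar>) \<le> exp (\<alpha> * \<bar>x\<bar>) * exp (\<alpha> * V0 * t)"
      by (simp add: exp_add[symmetric])
    have "exp (\<alpha> * \<bar>x - s t\<bar>) * \<bar>T2 \<gamma> t u0 x\<bar> = exp (- \<gamma> * t) * (exp (\<alpha> * \<bar>x - s t\<bar>) * \<bar>I\<bar>)"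
      unfolding T2_def I_def by (simp add: abs_mult)
    also have "\<dots> \<le> exp (- \<gamma> * t) * ((exp (\<alpha> * \<bar>x\<bar>) * exp (\<alpha> * V0 * t)) * \<bar>I\<bar>)"
      using ex by (intro mult_left_mono mult_right_mono) auto
    also have "\<dots> = exp (- \<gamma> * t) * exp (\<alpha> * V0 * t) * (exp (\<alpha> * \<bar>x\<bar>) * \<bar>I\<bar>)" by simp
    also have "\<dots> \<le> exp (- \<gamma> * t) * exp (\<alpha> * V0 * t) * (2 * M * exp (\<alpha>\<^sup>2 * t))"
      using IB by (intro mult_left_mono) auto
    also have "\<dots> = 2 * M * exp ((- \<gamma> + \<alpha>\<^sup>2 + \<alpha> * V0) * t)"
      by (simp add: exp_add[symmetric] algebra_simps)
    finally show ?thesis .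
  qed
  define c where "c = \<gamma> - \<alpha> * V0 - \<alpha>\<^sup>2"
  have aV: "\<alpha> * V0 \<le> \<gamma> / 2"
  proof -
    have "\<alpha> \<le> \<gamma> / (2 * V0)" using alpha_space by simp
    then have "\<alpha> * V0 \<le> \<gamma> / (2 * V0) * V0" using V0pos by (intro mult_right_mono) auto
    moreover have "\<gamma> / (2 * V0) * V0 = \<gamma> / 2" using V0pos by simp
    ultimately show ?thesis by linarith
  qed
  have a2: "\<alpha>\<^sup>2 \<le> \<gamma> / 8"
  proof -
    have "\<alpha> \<le> V0 / 4" using alpha_space v0_le by simp
    then have "\<alpha> * \<alpha> \<le> \<alpha> * (V0 / 4)" using alpha_nonneg by (rule mult_left_mono)
    then show ?thesis using aV by (simp add: power2_eq_square)
  qed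
  have c38: "c \<ge> 3 * \<gamma> / 8" unfolding c_def using aV a2 by linarith
  have cpos: "c > 0" using c38 gamma_pos by linarith
  have T1b: "exp (\<alpha> * \<bar>x - s t\<bar>) * \<bar>T1 \<gamma> s v t x\<bar> \<le> V0 / sqrt \<gamma>" if t: "t > 0" for t x
  proof -
    define f where "f = (\<lambda>\<tau>. exp (- \<gamma> * (t - \<tau>)) * heatG x t (s \<tau>) \<tau> * v \<tau>)"
    define K where "K = V0 / sqrt (4 * pi) * exp (- \<alpha> * \<bar>x - s t\<bar>)"
    have K0: "K \<ge> 0" unfolding K_def using V0pos by simp
    have ft: "f t = 0" unfolding f_def heatG_def by simp
    have fb: "\<bar>f \<tau>\<bar> \<le> K * (exp (- c * (t - \<tau>)) / sqrt (t - \<tau>))" if "0 \<le> \<tau>" "\<tau> < t" for \<tau>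
    proof -
      have r: "t - \<tau> > 0" using that by simp
      have w: "\<bar>v \<tau>\<bar> \<le> V0" using vb[of \<tau>] that by simp
      have ab: "\<bar>s t - s \<tau>\<bar> \<le> V0 * (t - \<tau>)" using slip[of t \<tau>] that by simp
      show ?thesis
        using T1_ptw[OF r alpha_nonneg w ab, of \<gamma> x]
        unfolding f_def heatG_def K_def c_def by simp
    qed
    have "\<bar>integral {0..t} f\<bar> \<le> K * (pi / 2 + exp (- 1)) / sqrt c"
      by (rule T1_total[OF t cpos K0 ft fb])
    then have "exp (\<alpha> * \<bar>x - s t\<bar>) * \<bar>T1 \<gamma> s v t x\<bar> \<le> exp (\<alpha> * \<bar>x - s t\<bar>) * (K * (pi / 2 + exp (- 1)) / sqrt c)"
      unfolding T1_def f_def by (intro mult_left_mono) auto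
    also have "\<dots> = V0 / sqrt (4 * pi) * (pi / 2 + exp (- 1)) / sqrt c"
      unfolding K_def using cpos by (simp add: exp_minus field_simps)
    also have "\<dots> \<le> V0 / sqrt \<gamma>" using numeric_bound[OF gamma_pos c38] V0pos by simp
    finally show ?thesis .
  qed
  have part1: "wnorm_at \<alpha> (s t) (\<lambda>x. u x t)
            \<le> ereal (V0 / sqrt \<gamma>) + ereal (2 * exp ((- \<gamma> + \<alpha>\<^sup>2 + \<alpha> * V0) * t)) * wnorm \<alpha> u0"
    if t: "t > 0" for t
  proof -
    have "ereal (exp (\<alpha> * \<bar>x - s t\<bar>) * \<bar>u x t\<bar>) \<le> ereal (V0 / sqrt \<gamma> + 2 * exp ((- \<gamma> + \<alpha>\<^sup>2 + \<alpha> * V0) * t) * M)" for x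
    proof -
      have "exp (\<alpha> * \<bar>x - s t\<bar>) * \<bar>u x t\<bar> = exp (\<alpha> * \<bar>x - s t\<bar>) * \<bar>T1 \<gamma> s v t x + T2 \<gamma> t u0 x\<bar>"
        using repr t by simp
      also have "\<dots> \<le> exp (\<alpha> * \<bar>x - s t\<bar>) * \<bar>T1 \<gamma> s v t x\<bar> + exp (\<alpha> * \<bar>x - s t\<bar>) * \<bar>T2 \<gamma> t u0 x\<bar>"
        by (simp add: distrib_left[symmetric] mult_left_mono abs_triangle_ineq)
      also have "\<dots> \<le> V0 / sqrt \<gamma> + 2 * M * exp ((- \<gamma> + \<alpha>\<^sup>2 + \<alpha> * V0) * t)"
        using T1b[OF t, of x] T2b[OF t, of x] by linarith
      finally show ?thesis by (simp add: algebra_simps)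
    qed
    then have "wnorm_at \<alpha> (s t) (\<lambda>x. u x t) \<le> ereal (V0 / sqrt \<gamma> + 2 * exp ((- \<gamma> + \<alpha>\<^sup>2 + \<alpha> * V0) * t) * M)"
      unfolding wnorm_at_def by (intro SUP_least) auto
    then show ?thesis using wM by simp
  qed
  have part2: "\<alpha> < V0 / 2 * (sqrt (1 + 4 * \<gamma> / V0\<^sup>2) - 1) \<longrightarrow>
            (let \<kappa> = \<gamma> - \<alpha>\<^sup>2 - \<alpha> * V0 in
              \<kappa> > 0 \<and>
              (\<forall>t>0. wnorm_at \<alpha> (s t) (T2 \<gamma> t u0)
                       \<le> ereal (2 * exp (- \<kappa> * t)) * wnorm \<alpha> u0))"
  proof
    assume H: "\<alpha> < V0 / 2 * (sqrt (1 + 4 * \<gamma> / V0\<^sup>2) - 1)"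
    define q where "q = sqrt (1 + 4 * \<gamma> / V0\<^sup>2)"
    have "2 * \<alpha> + V0 < V0 * q" using H V0pos unfolding q_def by (simp add: field_simps)
    then have "(2 * \<alpha> + V0)\<^sup>2 < (V0 * q)\<^sup>2" using alpha_nonneg V0pos
      by (intro power_strict_mono) auto
    also have "\<dots> = V0\<^sup>2 * (1 + 4 * \<gamma> / V0\<^sup>2)" unfolding q_def
      using gamma_pos V0pos by (simp add: power_mult_distrib add_nonneg_nonneg)
    also have "\<dots> = V0\<^sup>2 + 4 * \<gamma>" using V0pos by (simp add: field_simps)
    finally have "(2 * \<alpha> + V0)\<^sup>2 < V0\<^sup>2 + 4 * \<gamma>" .
    then have kpos: "\<gamma> - \<alpha>\<^sup>2 - \<alpha> * V0 > 0" by (simp add: power2_eq_square algebra_simps)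
    have "wnorm_at \<alpha> (s t) (T2 \<gamma> t u0) \<le> ereal (2 * exp (- (\<gamma> - \<alpha>\<^sup>2 - \<alpha> * V0) * t)) * wnorm \<alpha> u0"
      if t: "t > 0" for t
    proof -
      have "wnorm_at \<alpha> (s t) (T2 \<gamma> t u0) \<le> ereal (2 * M * exp ((- \<gamma> + \<alpha>\<^sup>2 + \<alpha> * V0) * t))"
        unfolding wnorm_at_def using T2b[OF t] by (intro SUP_least) auto
      also have "\<dots> = ereal (2 * exp (- (\<gamma> - \<alpha>\<^sup>2 - \<alpha> * V0) * t)) * wnorm \<alpha> u0"
        using wM by (simp add: algebra_simps)
      finally show ?thesis .
    qed
    note W = this
    show "let \<kappa> = \<gamma> - \<alpha>\<^sup>2 - \<alpha> * V0 in
              \<kappa> > 0 \<and>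
              (\<forall>t>0. wnorm_at \<alpha> (s t) (T2 \<gamma> t u0)
                       \<le> ereal (2 * exp (- \<kappa> * t)) * wnorm \<alpha> u0)"
      unfolding Let_def using kpos W by blast
  qed
  show ?thesis using part1 part2 by blast
qed

end
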